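(* Let $\lambda$ be a regular uncountable cardinal, $\kappa<\lambda$, and let $\mathcal{C}$ be a coherent sequence of length $\lambda$ and width $<\kappa$. If $\mathcal{C}$ has a weak thread, then $\mathcal{C}$ has a thread.
   Context: For a set of ordinals $A$, $\mathrm{acc}(A)$ is the set of $\beta<\sup\{\alpha+1\mid\alpha\in A\}$ with $\beta=\sup(A\cap\beta)$. A coherent sequence of length $\lambda$ and width $<\eta$ is $\mathcal{C}=\langle\mathcal{C}_\alpha\mid\alpha<\lambda\rangle$ where each $\mathcal{C}_\alpha$ is a nonempty set of fewer than $\eta$ closed unbounded subsets of $\alpha$ (for successor $\alpha=\beta+1$, $\mathcal{C}_\alpha=\{\{\beta\}\}$), such that for all $\beta<\lambda$, $C\in\mathcal{C}_\beta$ and $\alpha\in\mathrm{acc}(C)$, $C\cap\alpha\in\mathcal{C}_\alpha$. A thread through $\mathcal{C}$ is a club $D\subseteq\lambda$ with $D\cap\alpha\in\mathcal{C}_\alpha$ for all $\alpha\in\mathrm{acc}(D)$. A weak thread through $\mathcal{C}$ is a club $E\subseteq\lambda$ such that for every $\alpha\in\mathrm{acc}(E)$ there is $C\in\mathcal{C}_\alpha$ with $E\cap\alpha\subseteq C$. *)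

theory Defs
  imports Main "HOL-Library.Equipollence" "HOL-Library.Countable_Set"
begin

text \<open>Ordinals below lambda are modelled as the elements of a well-ordered type 'a
  whose order type is lambda; the ordinal alpha is identified with the set of its predecessors.\<close>

definition is_sup :: "'a::wellorder set \<Rightarrow> 'a \<Rightarrow> bool" where
  "is_sup S b \<longleftrightarrow> (\<forall>x\<in>S. x \<le> b) \<and> (\<forall>y. (\<forall>x\<in>S. x \<le> y) \<longrightarrow> b \<le> y)"

definition acc :: "'a::wellorder set \<Rightarrow> 'a set" where
  "acc A = {b. (\<exists>a\<in>A. b \<le> a) \<and> is_sup (A \<inter> {..<b}) b}"

definition club_in :: "'a::wellorder set \<Rightarrow> 'a \<Rightarrow> bool" where
  "club_in C a \<longleftrightarrow> C \<subseteq> {..<a}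
     \<and> (\<forall>g<a. \<exists>c\<in>C. g \<le> c)
     \<and> (\<forall>b<a. C \<inter> {..<b} \<noteq> {} \<and> is_sup (C \<inter> {..<b}) b \<longrightarrow> b \<in> C)"

definition club :: "'a::wellorder set \<Rightarrow> bool" where
  "club D \<longleftrightarrow> (\<forall>g. \<exists>d\<in>D. g \<le> d)
     \<and> (\<forall>b. D \<inter> {..<b} \<noteq> {} \<and> is_sup (D \<inter> {..<b}) b \<longrightarrow> b \<in> D)"

definition is_successor_of :: "'a::wellorder \<Rightarrow> 'a \<Rightarrow> bool" where
  "is_successor_of a b \<longleftrightarrow> b < a \<and> (\<forall>g. b < g \<longrightarrow> a \<le> g)"

definition regular_uncountable_cardinal_type :: "'a::wellorder itself \<Rightarrow> bool" where
  "regular_uncountable_cardinal_type _ \<longleftrightarrow>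
     uncountable (UNIV :: 'a set)
     \<and> (\<forall>a::'a. {..<a} \<prec> (UNIV :: 'a set))
     \<and> (\<forall>X::'a set. (\<forall>g. \<exists>x\<in>X. g \<le> x) \<longrightarrow> X \<approx> (UNIV :: 'a set))"

definition is_cardinal :: "'a::wellorder \<Rightarrow> bool" where
  "is_cardinal k \<longleftrightarrow> (\<forall>g<k. {..<g} \<prec> {..<k})"

definition coherent_seq :: "('a::wellorder \<Rightarrow> 'a set set) \<Rightarrow> 'a \<Rightarrow> bool" where
  "coherent_seq CC k \<longleftrightarrow>
     (\<forall>a. CC a \<noteq> {} \<and> CC a \<prec> {..<k} \<and> (\<forall>C\<in>CC a. club_in C a))
     \<and> (\<forall>a b. is_successor_of a b \<longrightarrow> CC a = {{b}})
     \<and> (\<forall>b. \<forall>C\<in>CC b. \<forall>a\<in>acc C. C \<inter> {..<a} \<in> CC a)"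

definition is_thread :: "('a::wellorder \<Rightarrow> 'a set set) \<Rightarrow> 'a set \<Rightarrow> bool" where
  "is_thread CC D \<longleftrightarrow> club D \<and> (\<forall>a\<in>acc D. D \<inter> {..<a} \<in> CC a)"

definition is_weak_thread :: "('a::wellorder \<Rightarrow> 'a set set) \<Rightarrow> 'a set \<Rightarrow> bool" where
  "is_weak_thread CC E \<longleftrightarrow> club E \<and> (\<forall>a\<in>acc E. \<exists>C\<in>CC a. E \<inter> {..<a} \<subseteq> C)"

end

theory Submission
  imports Defs
begin

lemma int_lessThan_le:
  fixes a g :: "'a::linorder"
  shows "a \<le> g \<Longrightarrow> X \<inter> {..<g} \<inter> {..<a} = X \<inter> {..<a}"
  by (auto dest: less_le_trans)

locale thr =
  fixes CC :: "'a::wellorder \<Rightarrow> 'a set set" and k :: 'a and E :: "'a set"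
  assumes reg: "regular_uncountable_cardinal_type TYPE('a)"
    and coh: "coherent_seq CC k"
    and wt: "is_weak_thread CC E"
begin

lemma reg_unc: "uncountable (UNIV::'a set)"
  using reg unfolding regular_uncountable_cardinal_type_def by (rule conjunct1)
lemma reg_init: "{..<a::'a} \<prec> (UNIV::'a set)"
proof -
  have "\<forall>a::'a. {..<a} \<prec> (UNIV :: 'a set)"
    using reg unfolding regular_uncountable_cardinal_type_def by (rule conjunct1[OF conjunct2])
  then show ?thesis by (rule spec)
qed
lemma reg_unb: fixes X :: "'a set" assumes "\<forall>g. \<exists>x\<in>X. g \<le> x" shows "X \<approx> (UNIV::'a set)"
proof -
  have H: "\<forall>X::'a set. (\<forall>g. \<exists>x\<in>X. g \<le> x) \<longrightarrow> X \<approx> (UNIV :: 'a set)"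
    using reg by (simp add: regular_uncountable_cardinal_type_def)
  show ?thesis using mp[OF spec[OF H, of X] assms] .
qed

lemma bounded: assumes "(X::'a set) \<prec> (UNIV::'a set)" shows "\<exists>b. \<forall>x\<in>X. x < b"
proof (rule ccontr)
  assume "\<not> ?thesis"
  then have "\<forall>g. \<exists>x\<in>X. g \<le> x" by (meson not_le)
  then have "X \<approx> (UNIV::'a set)" by (rule reg_unb)
  with assms show False unfolding lesspoll_def by (elim conjE notE)
qed

lemma no_max: "\<exists>y. (x::'a) < y"
proof (rule ccontr)
  assume "\<not> ?thesis"
  then have "\<forall>g. \<exists>y\<in>{x}. g \<le> y" by (auto simp: not_less)
  then have "{x} \<approx> (UNIV::'a set)" by (rule reg_unb)
  then have "finite (UNIV::'a set)" using eqpoll_finite_iff[of "{x}" "UNIV::'a set"] by simp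
  with reg_unc show False using countable_finite by blast
qed

lemma coh1: "\<forall>a. CC a \<noteq> {} \<and> CC a \<prec> {..<k} \<and> (\<forall>C\<in>CC a. club_in C a)"
  using coh unfolding coherent_seq_def by (rule conjunct1)
lemma coh3: "\<forall>b. \<forall>C\<in>CC b. \<forall>a\<in>acc C. C \<inter> {..<a} \<in> CC a"
  using coh unfolding coherent_seq_def by (rule conjunct2[OF conjunct2])
lemma cc_club: assumes "C \<in> CC a" shows "club_in C a"
proof -
  have "\<forall>C\<in>CC a. club_in C a" using spec[OF coh1, of a] by (rule conjunct2[OF conjunct2])
  then show ?thesis using assms by (rule bspec)
qed
lemma cc_coh: assumes "C \<in> CC b" "a \<in> acc C" shows "C \<inter> {..<a} \<in> CC a"
  using bspec[OF bspec[OF spec[OF coh3, of b] assms(1)] assms(2)] .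
lemma cc_small: "CC a \<prec> {..<k}"
  using spec[OF coh1, of a] by (rule conjunct1[OF conjunct2])
lemma wt_club: "club E"
  using wt unfolding is_weak_thread_def by (rule conjunct1)
lemma wt_acc: assumes "a \<in> acc E" shows "\<exists>C\<in>CC a. E \<inter> {..<a} \<subseteq> C"
proof -
  have "\<forall>a\<in>acc E. \<exists>C\<in>CC a. E \<inter> {..<a} \<subseteq> C"
    using wt unfolding is_weak_thread_def by (rule conjunct2)
  then show ?thesis using assms by (rule bspec)
qed

lemma E_unb: "\<exists>d\<in>E. g < d"
proof -
  obtain x where "g < x" using no_max by blast
  moreover obtain d where "d \<in> E" "x \<le> d" using wt_club unfolding club_def by blast
  ultimately show ?thesis by (meson less_le_trans)
qed

lemma small_univ: "X \<prec> {..<k} \<Longrightarrow> X \<prec> (UNIV::'a set)"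
  by (rule lesspoll_trans[OF _ reg_init])

lemma acc_unb: "\<exists>a\<in>acc E. g < a"
proof -
  obtain x0 where x0: "x0 \<in> E" "g < x0" using E_unb by blast
  define nx where "nx = (\<lambda>x::'a. SOME y. y \<in> E \<and> x < y)"
  have nx: "nx x \<in> E \<and> x < nx x" for x
    unfolding nx_def by (rule someI_ex) (use E_unb in blast)
  define e where "e = rec_nat x0 (\<lambda>_ x. nx x)"
  have e0: "e 0 = x0" and eS: "e (Suc n) = nx (e n)" for n by (simp_all add: e_def)
  have eE: "e n \<in> E" for n by (cases n) (simp_all add: e0 eS x0 nx)
  have einc: "e n < e (Suc n)" for n by (simp add: eS nx)
  have "range e \<prec> (UNIV::'a set)"
  proof -
    have "range e \<lesssim> (UNIV::'a set)" by (rule subset_imp_lepoll) simp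
    moreover have "\<not> range e \<approx> (UNIV::'a set)"
    proof
      assume r: "range e \<approx> (UNIV::'a set)"
      have c: "countable (range e)" by simp
      have "countable (UNIV::'a set)"
        by (rule countable_eqpoll[OF c eqpoll_sym[OF r]])
      with reg_unc show False by blast
    qed
    ultimately show ?thesis unfolding lesspoll_def by (rule conjI)
  qed
  then have "\<exists>b. \<forall>x\<in>range e. x < b" by (rule bounded)
  then obtain b where b: "\<forall>x\<in>range e. x < b" by blast
  define s where "s = (LEAST y. \<forall>n. e n \<le> y)"
  have es: "\<forall>n. e n \<le> s" unfolding s_def by (rule LeastI[of _ b]) (use b less_imp_le in blast)
  have sle: "s \<le> y" if "\<forall>n. e n \<le> y" for y unfolding s_def by (rule Least_le) (rule that)
  have eless: "e n < s" for n using einc es less_le_trans by blast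
  have "s \<in> acc E"
    unfolding acc_def is_sup_def
  proof (intro CollectI conjI ballI allI impI)
    show "\<exists>a\<in>E. s \<le> a" using wt_club unfolding club_def by blast
    show "x \<le> s" if "x \<in> E \<inter> {..<s}" for x using that by auto
    show "s \<le> y" if "\<forall>x\<in>E \<inter> {..<s}. x \<le> y" for y
      using that eE eless by (intro sle) blast
  qed
  moreover have "g < s" using x0 e0 eless by (metis less_trans)
  ultimately show ?thesis by blast
qed

definition "S a = {C \<in> CC a. E \<inter> {..<a} \<subseteq> C}"

lemma S_ne: "a \<in> acc E \<Longrightarrow> S a \<noteq> {}"
  unfolding S_def using wt_acc by blast

lemma S_small: "S a \<prec> {..<k}"
proof -
  have "S a \<lesssim> CC a" unfolding S_def by (rule subset_imp_lepoll) blast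
  then show ?thesis by (rule lesspoll_trans1[OF _ cc_small])
qed

lemma S_cc: "X \<in> S a \<Longrightarrow> X \<in> CC a" unfolding S_def by blast
lemma S_E: "X \<in> S a \<Longrightarrow> E \<inter> {..<a} \<subseteq> X" unfolding S_def by blast

lemma S_sub: "X \<in> S a \<Longrightarrow> X \<subseteq> {..<a}"
  using cc_club S_cc unfolding club_in_def by blast

lemma S_restr:
  assumes "a \<in> acc E" "b \<in> acc E" "b \<le> a" "X \<in> S a"
  shows "X \<inter> {..<b} \<in> S b"
proof (cases "b = a")
  case True
  then show ?thesis using assms S_sub by (simp add: Int_absorb2)
next
  case False
  then have ba: "b < a" using assms by simp
  have cl: "club_in X a" using assms cc_club S_cc by blast
  have bsup: "is_sup (E \<inter> {..<b}) b" using assms(2) unfolding acc_def by blast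
  have "b \<in> acc X"
    unfolding acc_def is_sup_def
  proof (intro CollectI conjI ballI allI impI)
    show "\<exists>x\<in>X. b \<le> x" using cl ba unfolding club_in_def by blast
    show "x \<le> b" if "x \<in> X \<inter> {..<b}" for x using that by auto
    show "b \<le> y" if "\<forall>x\<in>X \<inter> {..<b}. x \<le> y" for y
    proof -
      have "\<forall>x\<in>E \<inter> {..<b}. x \<le> y"
        using that S_E[OF assms(4)] ba by (auto dest: less_trans)
      then show ?thesis using bsup unfolding is_sup_def by blast
    qed
  qed
  then have "X \<inter> {..<b} \<in> CC b" using cc_coh assms S_cc by blast
  moreover have "E \<inter> {..<b} \<subseteq> X \<inter> {..<b}" using S_E[OF assms(4)] ba by (auto dest: less_trans)
  ultimately show ?thesis unfolding S_def by blast
qed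

definition "Im b = {X \<in> S b. \<forall>a\<in>acc E. b < a \<longrightarrow> (\<exists>Y\<in>S a. Y \<inter> {..<b} = X)}"

lemma Im_S: "X \<in> Im b \<Longrightarrow> X \<in> S b" unfolding Im_def by blast

lemma Im_small: "Im b \<prec> {..<k}"
proof -
  have "Im b \<lesssim> S b" unfolding Im_def by (rule subset_imp_lepoll) blast
  then show ?thesis by (rule lesspoll_trans1[OF _ S_small])
qed

lemma Im_lemma:
  assumes b: "b \<in> acc E" and P: "P \<subseteq> S b"
    and H: "\<forall>a\<in>acc E. b < a \<longrightarrow> (\<exists>Y\<in>S a. Y \<inter> {..<b} \<in> P)"
  shows "\<exists>Z\<in>P. Z \<in> Im b"
proof (rule ccontr)
  assume "\<not> ?thesis"
  then have "\<forall>Z\<in>P. \<exists>a. a \<in> acc E \<and> b < a \<and> \<not>(\<exists>Y\<in>S a. Y \<inter> {..<b} = Z)"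
    unfolding Im_def using P by blast
  then obtain f where f: "\<forall>Z\<in>P. f Z \<in> acc E \<and> b < f Z \<and> \<not>(\<exists>Y\<in>S (f Z). Y \<inter> {..<b} = Z)"
    by metis
  have "f ` P \<lesssim> S b" by (rule lepoll_trans[OF image_lepoll subset_imp_lepoll[OF P]])
  then have "f ` P \<prec> (UNIV::'a set)" by (rule lesspoll_trans1[OF _ small_univ[OF S_small]])
  then have "\<exists>c. \<forall>x\<in>f ` P. x < c" by (rule bounded)
  then obtain c where c: "\<forall>x\<in>f ` P. x < c" by blast
  obtain a where a: "a \<in> acc E" "max b c < a" using acc_unb by blast
  then obtain Y where Y: "Y \<in> S a" "Y \<inter> {..<b} \<in> P" using H by auto
  define Z where "Z = Y \<inter> {..<b}"
  have fZ: "f Z \<in> acc E" "b < f Z" "f Z < c" using f c Y Z_def by auto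
  have "c < a" using a(2) by simp
  then have "f Z < a" using fZ(3) by (simp add: less_trans)
  then have fa: "f Z \<le> a" by (rule less_imp_le)
  have W1: "Y \<inter> {..<f Z} \<in> S (f Z)" by (rule S_restr[OF a(1) fZ(1) fa Y(1)])
  have W2: "Y \<inter> {..<f Z} \<inter> {..<b} = Z"
    using int_lessThan_le[of b "f Z" Y] fZ(2) Z_def by simp
  have "Z \<in> P" using Y Z_def by simp
  then have "\<not>(\<exists>W\<in>S (f Z). W \<inter> {..<b} = Z)" using f by blast
  moreover have "\<exists>W\<in>S (f Z). W \<inter> {..<b} = Z" by (rule bexI[where P="\<lambda>W. W \<inter> {..<b} = Z", OF W2 W1])
  ultimately show False by (rule notE)
qed

lemma Im_ne: assumes b: "b \<in> acc E" shows "\<exists>X. X \<in> Im b"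
proof -
  have "\<exists>Z\<in>S b. Z \<in> Im b"
  proof (rule Im_lemma[OF b order.refl], intro ballI impI)
    fix a assume a: "a \<in> acc E" "b < a"
    obtain Y where "Y \<in> S a" using S_ne a by blast
    then show "\<exists>Y\<in>S a. Y \<inter> {..<b} \<in> S b" using S_restr a b less_imp_le by blast
  qed
  then show ?thesis by blast
qed

lemma Im_surj:
  assumes "b \<in> acc E" "g \<in> acc E" "b < g" "X \<in> Im b"
  shows "\<exists>Y\<in>Im g. Y \<inter> {..<b} = X"
proof -
  have "\<exists>Z\<in>{Z \<in> S g. Z \<inter> {..<b} = X}. Z \<in> Im g"
  proof (rule Im_lemma)
    show "g \<in> acc E" by fact
    show "{Z \<in> S g. Z \<inter> {..<b} = X} \<subseteq> S g" by blast
    show "\<forall>a\<in>acc E. g < a \<longrightarrow> (\<exists>Y\<in>S a. Y \<inter> {..<g} \<in> {Z \<in> S g. Z \<inter> {..<b} = X})"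
    proof (intro ballI impI)
      fix a assume a: "a \<in> acc E" "g < a"
      have ba: "b < a" using assms a by (meson less_trans)
      obtain W where W: "W \<in> S a" "W \<inter> {..<b} = X"
        using assms(4) a(1) ba unfolding Im_def by blast
      have "W \<inter> {..<g} \<in> S g" using S_restr a W assms by simp
      moreover have "W \<inter> {..<g} \<inter> {..<b} = X" using W assms int_lessThan_le less_imp_le by metis
      ultimately show "\<exists>Y\<in>S a. Y \<inter> {..<g} \<in> {Z \<in> S g. Z \<inter> {..<b} = X}" using W by blast
    qed
  qed
  then show ?thesis by blast
qed

lemma Im_restr:
  assumes "b \<in> acc E" "g \<in> acc E" "b \<le> g" "Y \<in> Im g"
  shows "Y \<inter> {..<b} \<in> Im b"
proof -
  have YS: "Y \<in> S g" using assms Im_S by blast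
  have "Y \<inter> {..<b} \<in> S b" using S_restr assms YS by blast
  moreover have "\<exists>W\<in>S a. W \<inter> {..<b} = Y \<inter> {..<b}" if a: "a \<in> acc E" "b < a" for a
  proof (cases "g < a")
    case True
    then obtain W where "W \<in> S a" "W \<inter> {..<g} = Y" using assms unfolding Im_def using a by blast
    then show ?thesis using assms int_lessThan_le by (metis)
  next
    case False
    then have "a \<le> g" by simp
    then have "Y \<inter> {..<a} \<in> S a" using S_restr a assms YS by blast
    then show ?thesis using a int_lessThan_le less_imp_le by metis
  qed
  ultimately show ?thesis unfolding Im_def by blast
qed

definition dif :: "'a set \<Rightarrow> 'a set \<Rightarrow> 'a \<Rightarrow> bool" where "dif X Y x \<longleftrightarrow> x \<in> (X - Y) \<union> (Y - X)"
definition sp :: "'a set \<Rightarrow> 'a set \<Rightarrow> 'a" where "sp X Y = (LEAST x. dif X Y x)"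

lemma sp_mem: assumes "X \<noteq> Y" shows "sp X Y \<in> (X - Y) \<union> (Y - X)"
proof -
  have "\<exists>x. dif X Y x" using assms unfolding dif_def by blast
  then have "dif X Y (sp X Y)" unfolding sp_def by (rule LeastI_ex[of "dif X Y"])
  then show ?thesis unfolding dif_def .
qed

lemma sp_min: assumes "x \<in> (X - Y) \<union> (Y - X)" shows "sp X Y \<le> x"
proof -
  have "dif X Y x" using assms unfolding dif_def .
  then show ?thesis unfolding sp_def by (rule Least_le[of "dif X Y"])
qed

lemma sp_restr:
  assumes "X \<noteq> Y" "sp X Y < b"
  shows "X \<inter> {..<b} \<noteq> Y \<inter> {..<b}" "sp (X \<inter> {..<b}) (Y \<inter> {..<b}) = sp X Y"
proof -
  have m: "sp X Y \<in> (X - Y) \<union> (Y - X)" using sp_mem assms by blast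
  then show "X \<inter> {..<b} \<noteq> Y \<inter> {..<b}" using assms by blast
  show "sp (X \<inter> {..<b}) (Y \<inter> {..<b}) = sp X Y"
    unfolding sp_def[of "X \<inter> {..<b}"]
  proof (rule Least_equality[of "dif (X \<inter> {..<b}) (Y \<inter> {..<b})"])
    show "dif (X \<inter> {..<b}) (Y \<inter> {..<b}) (sp X Y)" unfolding dif_def using m assms(2) by auto
    show "sp X Y \<le> y" if "dif (X \<inter> {..<b}) (Y \<inter> {..<b}) y" for y
      by (rule sp_min) (use that in \<open>auto simp: dif_def\<close>)
  qed
qed

lemma sp_ext:
  assumes "X \<inter> {..<b} \<noteq> Y \<inter> {..<b}"
  shows "sp X Y = sp (X \<inter> {..<b}) (Y \<inter> {..<b})"
proof -
  have m: "sp (X \<inter> {..<b}) (Y \<inter> {..<b}) \<in> (X \<inter> {..<b} - Y \<inter> {..<b}) \<union> (Y \<inter> {..<b} - X \<inter> {..<b})"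
    by (rule sp_mem[OF assms])
  then have "sp X Y \<le> sp (X \<inter> {..<b}) (Y \<inter> {..<b})" by (intro sp_min) auto
  moreover have "sp (X \<inter> {..<b}) (Y \<inter> {..<b}) < b" using m by auto
  ultimately have lt: "sp X Y < b" by simp
  have ne: "X \<noteq> Y" using assms by auto
  show ?thesis using sp_restr(2)[OF ne lt] by simp
qed

definition "SP = {sp X Y | X Y. \<exists>d\<in>acc E. X \<in> Im d \<and> Y \<in> Im d \<and> X \<noteq> Y}"

lemma SP_claim:
  assumes d: "d \<in> acc E"
  shows "SP \<inter> {..<d} \<subseteq> (\<lambda>(X,Y). sp X Y) ` (Im d \<times> Im d)"
proof
  fix s assume "s \<in> SP \<inter> {..<d}"
  then obtain X Y d' where s: "s = sp X Y" "d' \<in> acc E" "X \<in> Im d'" "Y \<in> Im d'" "X \<noteq> Y" "s < d"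
    unfolding SP_def by blast
  show "s \<in> (\<lambda>(X,Y). sp X Y) ` (Im d \<times> Im d)"
  proof (cases "d \<le> d'")
    case True
    have "X \<inter> {..<d} \<in> Im d" by (rule Im_restr[OF d s(2) True s(3)])
    moreover have "Y \<inter> {..<d} \<in> Im d" by (rule Im_restr[OF d s(2) True s(4)])
    ultimately have mem: "(X \<inter> {..<d}, Y \<inter> {..<d}) \<in> Im d \<times> Im d" by simp
    have "sp X Y < d" using s(1) s(6) by simp
    then have "sp (X \<inter> {..<d}) (Y \<inter> {..<d}) = s" using sp_restr(2)[OF s(5)] s(1) by simp
    then show ?thesis by (intro rev_image_eqI[OF mem]) simp
  next
    case False
    then have dd: "d' < d" by simp
    obtain X' where X': "X' \<in> Im d" "X' \<inter> {..<d'} = X" using Im_surj[OF s(2) d dd s(3)] by blast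
    obtain Y' where Y': "Y' \<in> Im d" "Y' \<inter> {..<d'} = Y" using Im_surj[OF s(2) d dd s(4)] by blast
    have mem: "(X', Y') \<in> Im d \<times> Im d" using X' Y' by simp
    have "X' \<inter> {..<d'} \<noteq> Y' \<inter> {..<d'}" using X' Y' s(5) by simp
    then have "sp X' Y' = sp (X' \<inter> {..<d'}) (Y' \<inter> {..<d'})" by (rule sp_ext)
    then have "sp X' Y' = s" using X' Y' s(1) by simp
    then show ?thesis by (intro rev_image_eqI[OF mem]) simp
  qed
qed

lemma exists_inf: "\<exists>m. k \<le> m \<and> infinite {..<m::'a}"
proof -
  have "\<exists>m0. infinite {..<m0::'a}"
  proof (rule ccontr)
    assume "\<not> ?thesis"
    then have fin: "finite {..<x::'a}" for x by blast
    have "inj (\<lambda>x::'a. card {..<x})"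
    proof (rule injI)
      fix x y :: 'a assume eq: "card {..<x} = card {..<y}"
      show "x = y"
      proof (rule ccontr)
        assume "x \<noteq> y"
        then consider "x < y" | "y < x" by fastforce
        then show False
        proof cases
          case 1
          then have "{..<x} \<subset> {..<y}" by auto
          then show False using psubset_card_mono fin eq by (metis less_irrefl)
        next
          case 2
          then have "{..<y} \<subset> {..<x}" by auto
          then show False using psubset_card_mono fin eq by (metis less_irrefl)
        qed
      qed
    qed
    then have "countable (UNIV::'a set)" by (rule countableI)
    with reg_unc show False by blast
  qed
  then obtain m0 where "infinite {..<m0::'a}" by blast
  moreover have "{..<m0} \<subseteq> {..<max k m0}" by auto
  ultimately show ?thesis by (metis infinite_super max.cobounded1)
qed

lemma square_less:
  assumes "X \<prec> {..<k}" "k \<le> m" "infinite {..<m}"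
  shows "X \<times> X \<prec> {..<m}"
proof -
  have "{..<k} \<lesssim> {..<m}" using assms by (intro subset_imp_lepoll) auto
  then have Xm: "X \<prec> {..<m}" by (rule lesspoll_trans2[OF assms(1)])
  show ?thesis
  proof (cases "finite X")
    case True
    then show ?thesis by (intro finite_lesspoll_infinite[OF assms(3)]) simp
  next
    case False
    then have "X \<times> X \<approx> X"
      using card_of_Times_same_infinite[OF False] eqpoll_iff_card_of_ordIso by blast
    then show ?thesis by (rule eq_lesspoll_trans[OF _ Xm])
  qed
qed

lemma SP_bounded: "\<exists>b. \<forall>s\<in>SP. s < b"
proof (rule ccontr)
  assume "\<not> ?thesis"
  then have "\<forall>g. \<exists>s\<in>SP. g \<le> s" by (meson not_le)
  then have "SP \<approx> (UNIV::'a set)" by (rule reg_unb)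
  then have "(UNIV::'a set) \<approx> SP" by (rule eqpoll_sym)
  then obtain g where g: "bij_betw g (UNIV::'a set) SP" unfolding eqpoll_def by blast
  obtain m where m: "k \<le> m" "infinite {..<m}" using exists_inf by blast
  have "g ` {..<m} \<prec> (UNIV::'a set)" by (rule lesspoll_trans1[OF image_lepoll reg_init])
  then have "\<exists>c. \<forall>x\<in>g ` {..<m}. x < c" by (rule bounded)
  then obtain c where c: "\<forall>x\<in>g ` {..<m}. x < c" by blast
  obtain d where d: "d \<in> acc E" "c < d" using acc_unb by blast
  have "g ` {..<m} \<subseteq> SP \<inter> {..<d}"
    using g c d bij_betwE by (fastforce dest: less_trans)
  also have "\<dots> \<subseteq> (\<lambda>(X,Y). sp X Y) ` (Im d \<times> Im d)" by (rule SP_claim[OF d(1)])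
  finally have sub: "g ` {..<m} \<subseteq> (\<lambda>(X,Y). sp X Y) ` (Im d \<times> Im d)" .
  have "inj_on g {..<m}" using g bij_betw_imp_inj_on inj_on_subset by blast
  then have "{..<m} \<approx> g ` {..<m}" by (rule eqpoll_sym[OF inj_on_image_eqpoll_self])
  also have "g ` {..<m} \<lesssim> Im d \<times> Im d"
    by (rule subset_image_lepoll[OF sub])
  finally have "{..<m} \<lesssim> Im d \<times> Im d" .
  moreover have "Im d \<times> Im d \<prec> {..<m}" by (rule square_less[OF Im_small m])
  ultimately have "{..<m} \<prec> {..<m}" by (rule lesspoll_trans1)
  then show False by simp
qed

lemma thread: "\<exists>D. is_thread CC D"
proof -
  obtain b where b: "\<forall>s\<in>SP. s < b" using SP_bounded by blast
  obtain b0 where b0: "b0 \<in> acc E" "b < b0" using acc_unb by blast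
  obtain X0 where X0: "X0 \<in> Im b0" using Im_ne b0 by blast
  have uniq: "Y = Y'" if "g \<in> acc E" "b0 \<le> g" "Y \<in> Im g" "Y' \<in> Im g"
      "Y \<inter> {..<b0} = X0" "Y' \<inter> {..<b0} = X0" for g Y Y'
  proof (rule ccontr)
    assume ne: "Y \<noteq> Y'"
    then have "sp Y Y' \<in> SP" unfolding SP_def using that by blast
    then have "sp Y Y' < b0" using b b0 by (meson less_trans)
    then have "Y \<inter> {..<b0} \<noteq> Y' \<inter> {..<b0}" using sp_restr ne by blast
    then show False using that by simp
  qed
  have exY: "\<exists>Y\<in>Im g. Y \<inter> {..<b0} = X0" if "g \<in> acc E" "b0 \<le> g" for g
  proof (cases "g = b0")
    case True
    have "X0 \<inter> {..<b0} = X0" using X0 Im_S S_sub by blast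
    then show ?thesis using True X0 by blast
  next
    case False
    then show ?thesis using Im_surj b0 that X0 by simp
  qed
  define D where "D = \<Union>{Y. \<exists>g\<in>acc E. b0 \<le> g \<and> Y \<in> Im g \<and> Y \<inter> {..<b0} = X0}"
  have Dg: "D \<inter> {..<g} = Y" if g: "g \<in> acc E" "b0 \<le> g" "Y \<in> Im g" "Y \<inter> {..<b0} = X0" for g Y
  proof
    show "Y \<subseteq> D \<inter> {..<g}" unfolding D_def using g Im_S S_sub by blast
    show "D \<inter> {..<g} \<subseteq> Y"
    proof
      fix x assume "x \<in> D \<inter> {..<g}"
      then obtain Y' g' where Y': "x \<in> Y'" "g' \<in> acc E" "b0 \<le> g'" "Y' \<in> Im g'" "Y' \<inter> {..<b0} = X0" "x < g"
        unfolding D_def by blast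
      show "x \<in> Y"
      proof (cases "g \<le> g'")
        case True
        have "Y' \<inter> {..<g} \<in> Im g" using Im_restr g Y' True by blast
        moreover have "Y' \<inter> {..<g} \<inter> {..<b0} = X0" using int_lessThan_le g Y' by metis
        ultimately have "Y' \<inter> {..<g} = Y" using uniq g by blast
        then show ?thesis using Y' by blast
      next
        case False
        then have le: "g' \<le> g" by simp
        have "Y \<inter> {..<g'} \<in> Im g'" using Im_restr g Y' le by blast
        moreover have "Y \<inter> {..<g'} \<inter> {..<b0} = X0" using int_lessThan_le g Y' by metis
        ultimately have "Y \<inter> {..<g'} = Y'" using uniq Y' by blast
        then show ?thesis using Y' by blast
      qed
    qed
  qed
  have Dlev: "\<exists>g. x < g \<and> D \<inter> {..<g} \<in> CC g \<and> E \<inter> {..<g} \<subseteq> D \<inter> {..<g}" for x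
  proof -
    obtain g where g: "g \<in> acc E" "max x b0 < g" using acc_unb by blast
    then have "b0 \<le> g" by (simp add: less_imp_le)
    then obtain Y where Y: "Y \<in> Im g" "Y \<inter> {..<b0} = X0" using exY g by blast
    then have "D \<inter> {..<g} = Y" using Dg g \<open>b0 \<le> g\<close> by blast
    moreover have YS: "Y \<in> S g" using Y(1) by (rule Im_S)
    moreover have "x < g" using g(2) by simp
    ultimately show ?thesis using S_cc[OF YS] S_E[OF YS] by auto
  qed
  have "is_thread CC D"
    unfolding is_thread_def club_def
  proof (intro conjI allI impI ballI)
    fix x
    obtain e where e: "e \<in> E" "x \<le> e" using wt_club unfolding club_def by blast
    obtain g where "e < g" "E \<inter> {..<g} \<subseteq> D \<inter> {..<g}" using Dlev by blast
    then show "\<exists>d\<in>D. x \<le> d" using e by blast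
  next
    fix a assume a: "D \<inter> {..<a} \<noteq> {} \<and> is_sup (D \<inter> {..<a}) a"
    obtain g where g: "a < g" "D \<inter> {..<g} \<in> CC g" using Dlev by blast
    have cl: "club_in (D \<inter> {..<g}) g" using cc_club g by blast
    have "D \<inter> {..<g} \<inter> {..<a} = D \<inter> {..<a}" using g int_lessThan_le less_imp_le by metis
    then have "a \<in> D \<inter> {..<g}" using cl a g unfolding club_in_def by metis
    then show "a \<in> D" by blast
  next
    fix a assume a: "a \<in> acc D"
    obtain g where g: "a < g" "D \<inter> {..<g} \<in> CC g" using Dlev by blast
    have cl: "club_in (D \<inter> {..<g}) g" using cc_club g by blast
    have eq: "D \<inter> {..<g} \<inter> {..<a} = D \<inter> {..<a}" using g int_lessThan_le less_imp_le by metis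
    have "a \<in> acc (D \<inter> {..<g})"
      unfolding acc_def
    proof (intro CollectI conjI)
      show "\<exists>x\<in>D \<inter> {..<g}. a \<le> x" using cl g unfolding club_in_def by blast
      show "is_sup (D \<inter> {..<g} \<inter> {..<a}) a" using a eq unfolding acc_def by simp
    qed
    then have "D \<inter> {..<g} \<inter> {..<a} \<in> CC a" using cc_coh g by blast
    then show "D \<inter> {..<a} \<in> CC a" using eq by simp
  qed
  then show ?thesis by blast
qed

end

theorem lemma2p3:
  fixes CC :: "'a::wellorder \<Rightarrow> 'a set set" and k :: 'a
  assumes "regular_uncountable_cardinal_type TYPE('a)"
    and "is_cardinal k"
    and "coherent_seq CC k"
    and "\<exists>E. is_weak_thread CC E"
  shows "\<exists>D. is_thread CC D"
proof -
  obtain E where "is_weak_thread CC E" using assms by blast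
  then interpret thr CC k E using assms by unfold_locales
  show ?thesis by (rule thread)
qed

end
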